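(* Let $(w_{ij})_{i,j=1}^N$ be a nonnegative weight matrix with $w_{ii}=0$ defining a strongly connected directed graph on $N=N_{\mathrm{G}}+N_{\mathrm{R}}$ vertices, each vertex colored green or red with $N_{\mathrm{G}}$ green and $N_{\mathrm{R}}$ red vertices. Assume: (i) $w_{ij}=0$ whenever $i,j$ have the same color; (ii) every green vertex has in-degree $\sum_j w_{ji}=w^{\mathrm{in}}_{\mathrm{G}}$ and out-degree $\sum_j w_{ij}=w^{\mathrm{out}}_{\mathrm{G}}$, and every red vertex has in-degree $w^{\mathrm{in}}_{\mathrm{R}}$ and out-degree $w^{\mathrm{out}}_{\mathrm{R}}$, all positive; (iii) for every green $i$ and red $j$, $w_{ji}=\frac{w^{\mathrm{in}}_{\mathrm{G}}}{w^{\mathrm{out}}_{\mathrm{G}}}\,w_{ij}$. Let $a_{\mathrm{G}},a_{\mathrm{R}},b_{\mathrm{G}},b_{\mathrm{R}}>0$ and set $$\zeta_{\mathrm{G}}=\frac{b_{\mathrm{R}}w^{\mathrm{in}}_{\mathrm{G}}(a_{\mathrm{R}}w^{\mathrm{out}}_{\mathrm{R}}+b_{\mathrm{G}}w^{\mathrm{in}}_{\mathrm{R}})}{a_{\mathrm{R}}w^{\mathrm{out}}_{\mathrm{R}}(a_{\mathrm{G}}w^{\mathrm{out}}_{\mathrm{G}}+b_{\mathrm{R}}w^{\mathrm{in}}_{\mathrm{G}})},\qquad \zeta_{\mathrm{R}}=\frac{b_{\mathrm{G}}w^{\mathrm{in}}_{\mathrm{R}}(a_{\mathrm{G}}w^{\mathrm{out}}_{\mathrm{G}}+b_{\mathrm{R}}w^{\mathrm{in}}_{\mathrm{G}})}{a_{\mathrm{G}}w^{\mathrm{out}}_{\mathrm{G}}(a_{\mathrm{R}}w^{\mathrm{out}}_{\mathrm{R}}+b_{\mathrm{G}}w^{\mathrm{in}}_{\mathrm{R}})},$$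 and for a state $\mathbf{x}\in\{0,1\}^N$ let $\zeta_i=\zeta_{\mathrm{G}}$ if $i$ is green and $\zeta_i=\zeta_{\mathrm{R}}$ if $i$ is red. Then $\prod_i\zeta_i^{X_n(i)}$ is a martingale for the process $X_n$, and, provided $\zeta_{\mathrm{G}}^{N_{\mathrm{G}}}\zeta_{\mathrm{R}}^{N_{\mathrm{R}}}\neq1$, the fixation probability of $A$ from initial state $\mathbf{x}$ is $$\rho_A(\mathbf{x})=\frac{1-\prod_{i=1}^N\zeta_i^{x_i}}{1-\zeta_{\mathrm{G}}^{N_{\mathrm{G}}}\zeta_{\mathrm{R}}^{N_{\mathrm{R}}}}.$$ In particular the mean fixation probability of a single $A$ at a uniformly random vertex is $$\rho_A=\frac{1-\frac1N\left(N_{\mathrm{G}}\zeta_{\mathrm{G}}+N_{\mathrm{R}}\zeta_{\mathrm{R}}\right)}{1-\zeta_{\mathrm{G}}^{N_{\mathrm{G}}}\zeta_{\mathrm{R}}^{N_{\mathrm{R}}}}.$$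
   Context: States are $\mathbf{x}\in\{0,1\}^N$, with $x_i=1$ meaning vertex $i$ holds type $A$ and $x_i=0$ type $B$. The fitness of the occupant of vertex $j$ is $a_j$ if it is type $A$ and $b_j$ if type $B$, where $a_j=a_{\mathrm{G}},b_j=b_{\mathrm{G}}$ if $j$ is green and $a_j=a_{\mathrm{R}},b_j=b_{\mathrm{R}}$ if $j$ is red. Weighted Moran process: in each step, an ordered pair $(j,i)$ is chosen with probability proportional to $f_j w_{ji}$, where $f_j$ is the fitness of the occupant of $j$ (normalized by $\sum_{j,k}f_j w_{jk}$), and the occupant of $i$ is replaced by an offspring of the type of the occupant of $j$. $X_n$ denotes the state at time $n$. Fixation of $A$ means absorption in the all-ones state. *)

theory Defs
  imports "HOL-Analysis.Analysis"
begin

text \<open>Vertices form a finite type 'v; a state is the set of vertices occupied by type A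
  (x_i = 1 iff i is in the set). Green vertices form the set G, red ones its complement.\<close>

definition fitness :: "'v set \<Rightarrow> real \<Rightarrow> real \<Rightarrow> real \<Rightarrow> real \<Rightarrow> 'v set \<Rightarrow> 'v \<Rightarrow> real" where
  "fitness G aG aR bG bR x j =
     (if j \<in> x then (if j \<in> G then aG else aR) else (if j \<in> G then bG else bR))"

definition total_weight :: "'v::finite set \<Rightarrow> ('v \<Rightarrow> 'v \<Rightarrow> real) \<Rightarrow> real \<Rightarrow> real \<Rightarrow> real \<Rightarrow> real \<Rightarrow> 'v set \<Rightarrow> real" where
  "total_weight G w aG aR bG bR x = (\<Sum>j\<in>UNIV. \<Sum>k\<in>UNIV. fitness G aG aR bG bR x j * w j k)"

definition replace_step :: "'v set \<Rightarrow> 'v \<Rightarrow> 'v \<Rightarrow> 'v set" where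
  "replace_step x j i = (if j \<in> x then insert i x else x - {i})"

definition moran_trans :: "'v::finite set \<Rightarrow> ('v \<Rightarrow> 'v \<Rightarrow> real) \<Rightarrow> real \<Rightarrow> real \<Rightarrow> real \<Rightarrow> real
    \<Rightarrow> 'v set \<Rightarrow> 'v set \<Rightarrow> real" where
  "moran_trans G w aG aR bG bR x y =
     (\<Sum>(j, i) \<in> {(j, i). replace_step x j i = y}.
        fitness G aG aR bG bR x j * w j i / total_weight G w aG aR bG bR x)"

fun moran_nstep :: "'v::finite set \<Rightarrow> ('v \<Rightarrow> 'v \<Rightarrow> real) \<Rightarrow> real \<Rightarrow> real \<Rightarrow> real \<Rightarrow> real
    \<Rightarrow> nat \<Rightarrow> 'v set \<Rightarrow> 'v set \<Rightarrow> real" where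
  "moran_nstep G w aG aR bG bR 0 x y = (if x = y then 1 else 0)"
| "moran_nstep G w aG aR bG bR (Suc n) x y =
     (\<Sum>z\<in>UNIV. moran_nstep G w aG aR bG bR n x z * moran_trans G w aG aR bG bR z y)"

definition zetaG :: "real \<Rightarrow> real \<Rightarrow> real \<Rightarrow> real \<Rightarrow> real \<Rightarrow> real \<Rightarrow> real \<Rightarrow> real \<Rightarrow> real" where
  "zetaG aG aR bG bR winG woutG winR woutR =
     (bR * winG * (aR * woutR + bG * winR)) / (aR * woutR * (aG * woutG + bR * winG))"

definition zetaR :: "real \<Rightarrow> real \<Rightarrow> real \<Rightarrow> real \<Rightarrow> real \<Rightarrow> real \<Rightarrow> real \<Rightarrow> real \<Rightarrow> real" where
  "zetaR aG aR bG bR winG woutG winR woutR =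
     (bG * winR * (aG * woutG + bR * winG)) / (aG * woutG * (aR * woutR + bG * winR))"

end

theory Submission
  imports Defs
begin


fun pw :: "('a::finite \<Rightarrow> 'a \<Rightarrow> real) \<Rightarrow> nat \<Rightarrow> 'a \<Rightarrow> 'a \<Rightarrow> real" where
  "pw P 0 x y = (if x = y then 1 else 0)"
| "pw P (Suc n) x y = (\<Sum>z\<in>UNIV. pw P n x z * P z y)"

lemma delta1: "(\<Sum>z\<in>(UNIV::'a::finite set). (if x = z then 1 else 0) * f z) = (f x :: real)"
proof -
  have "(\<Sum>z\<in>(UNIV::'a set). (if x = z then 1 else 0) * f z) = (\<Sum>z\<in>UNIV. if x = z then f z else 0)"
    by (intro sum.cong) auto
  then show ?thesis by simp
qed

lemma delta2: "(\<Sum>z\<in>(UNIV::'a::finite set). f z * (if z = x then 1 else 0)) = (f x :: real)"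
  using delta1[of x f] by (simp add: eq_commute mult.commute)

lemma delta3: "(\<Sum>z\<in>(UNIV::'a::finite set). (if z = x then 1 else 0) * f z) = (f x :: real)"
  using delta1[of x f] by (simp add: eq_commute mult.commute)

lemma pw_nonneg:
  assumes "\<And>x y. P x y \<ge> 0"
  shows "pw P n x y \<ge> 0"
  by (induction n arbitrary: y) (auto intro!: sum_nonneg simp: assms)

lemma pw_rowsum:
  assumes "\<And>x. (\<Sum>y\<in>UNIV. P x y) = 1"
  shows "(\<Sum>y\<in>UNIV. pw P n x y) = 1"
proof (induction n)
  case 0 then show ?case by simp
next
  case (Suc n)
  have "(\<Sum>y\<in>UNIV. pw P (Suc n) x y) = (\<Sum>z\<in>UNIV. pw P n x z * (\<Sum>y\<in>UNIV. P z y))"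
    by (simp add: sum_distrib_left) (rule sum.swap)
  also have "\<dots> = 1" using Suc assms by simp
  finally show ?case .
qed

lemma pw_add:
  "pw P (n + m) x z = (\<Sum>y\<in>UNIV. pw P n x y * pw P m y z)"
proof (induction m arbitrary: z)
  case 0 then show ?case by (simp add: delta2)
next
  case (Suc m)
  have "pw P (n + Suc m) x z = (\<Sum>v\<in>UNIV. pw P (n+m) x v * P v z)" by simp
  also have "\<dots> = (\<Sum>v\<in>UNIV. (\<Sum>y\<in>UNIV. pw P n x y * pw P m y v) * P v z)" using Suc by simp
  also have "\<dots> = (\<Sum>y\<in>UNIV. pw P n x y * (\<Sum>v\<in>UNIV. pw P m y v * P v z))"
    by (simp add: sum_distrib_left sum_distrib_right mult.assoc) (rule sum.swap)
  finally show ?case by simp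
qed

lemma pw_one: "pw P 1 x y = P x y"
  by (simp add: delta1)

lemma pw_left: "pw P (Suc n) x y = (\<Sum>z\<in>UNIV. P x z * pw P n z y)"
  using pw_add[of P 1 n x y] pw_one[of P] by simp

lemma pw_harmonic:
  assumes "\<And>x. (\<Sum>y\<in>UNIV. P x y * h y) = h x"
  shows "(\<Sum>y\<in>UNIV. pw P n x y * h y) = h x"
proof (induction n)
  case 0 then show ?case by (simp add: delta1)
next
  case (Suc n)
  have "(\<Sum>y\<in>UNIV. pw P (Suc n) x y * h y) = (\<Sum>z\<in>UNIV. pw P n x z * (\<Sum>y\<in>UNIV. P z y * h y))"
    by (simp add: sum_distrib_left sum_distrib_right mult.assoc) (rule sum.swap)
  also have "\<dots> = h x" using Suc assms by simp
  finally show ?case .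
qed

lemma absorbing_row:
  fixes P :: "'a::finite \<Rightarrow> 'a \<Rightarrow> real"
  assumes nn: "\<And>x y. P x y \<ge> 0" and rs: "\<And>x. (\<Sum>y\<in>UNIV. P x y) = 1" and a: "P a a = 1"
    and "y \<noteq> a"
  shows "P a y = 0"
proof -
  have "(\<Sum>y\<in>UNIV. P a y) = P a a + (\<Sum>y\<in>UNIV - {a}. P a y)"
    by (rule sum.remove) auto
  then have "(\<Sum>y\<in>UNIV - {a}. P a y) = 0" using rs a by simp
  then show ?thesis using assms by (simp add: sum_nonneg_eq_0_iff nn)
qed

lemma pw_absorb:
  assumes nn: "\<And>x y. P x y \<ge> 0" and rs: "\<And>x. (\<Sum>y\<in>UNIV. P x y) = 1" and a: "P a a = 1"
  shows "pw P n a y = (if y = a then 1 else 0)"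
proof (induction n arbitrary: y)
  case 0 then show ?case by simp
next
  case (Suc n)
  have "pw P (Suc n) a y = P a y" unfolding pw.simps Suc.IH by (simp add: delta3)
  then show ?case using absorbing_row[of P a y] nn rs a by simp
qed

lemma absorption:
  fixes P :: "'a::finite \<Rightarrow> 'a \<Rightarrow> real" and A :: "'a set"
  assumes nn: "\<And>x y. P x y \<ge> 0" and rs: "\<And>x. (\<Sum>y\<in>UNIV. P x y) = 1"
    and absA: "\<And>a. a \<in> A \<Longrightarrow> P a a = 1"
    and reach: "\<And>y. (\<Sum>z\<in>A. pw P K y z) > 0"
  shows "(\<lambda>n. \<Sum>y\<in>UNIV - A. pw P n x y) \<longlonglongrightarrow> 0"
proof -
  define T :: "nat \<Rightarrow> 'a \<Rightarrow> real" where "T = (\<lambda>n v. \<Sum>y\<in>UNIV - A. pw P n v y)"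
  have pwnn: "\<And>n x y. pw P n x y \<ge> 0" by (rule pw_nonneg[OF nn])
  have split: "(\<Sum>z\<in>A. pw P n y z) + T n y = 1" for n y
  proof -
    have "(\<Sum>z\<in>UNIV. pw P n y z) = (\<Sum>z\<in>UNIV - A. pw P n y z) + (\<Sum>z\<in>A. pw P n y z)"
      by (rule sum.subset_diff) auto
    then show ?thesis using pw_rowsum[of P n y] rs unfolding T_def by simp
  qed
  have Tnn: "T n y \<ge> 0" for n y unfolding T_def by (intro sum_nonneg pwnn)
  have Tle1: "T n y \<le> 1" for n y
  proof -
    have "(\<Sum>z\<in>A. pw P n y z) \<ge> 0" by (intro sum_nonneg pwnn)
    then show ?thesis using split[of n y] by linarith
  qed
  have TA: "T m a = 0" if "a \<in> A" for m a
    unfolding T_def using pw_absorb[where P=P and a=a and n=m, OF nn rs absA[OF that]] that by (auto intro!: sum.neutral)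
  have TK: "T K y < 1" for y using split[of K y] reach[of y] by linarith
  have step: "T (n + m) x = (\<Sum>y\<in>UNIV - A. pw P n x y * T m y)" for n m x
  proof -
    have "T (n + m) x = (\<Sum>y\<in>UNIV. pw P n x y * T m y)"
      unfolding T_def pw_add by (simp add: sum_distrib_left) (rule sum.swap)
    also have "\<dots> = (\<Sum>y\<in>UNIV - A. pw P n x y * T m y) + (\<Sum>y\<in>A. pw P n x y * T m y)"
      by (rule sum.subset_diff) auto
    also have "(\<Sum>y\<in>A. pw P n x y * T m y) = 0" using TA by simp
    finally show ?thesis by simp
  qed
  define q where "q = Max (range (T K))"
  have q1: "q < 1" unfolding q_def using TK by (subst Max_less_iff) auto
  have qge: "T K y \<le> q" for y unfolding q_def by (simp add: Max_ge)
  have q0: "q \<ge> 0" using Tnn[of K x] qge[of x] by linarith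
  have dec: "T (n + K) x \<le> q * T n x" for n x
  proof -
    have "T (n + K) x \<le> (\<Sum>y\<in>UNIV - A. pw P n x y * q)"
      unfolding step by (intro sum_mono mult_left_mono qge pwnn)
    also have "\<dots> = q * T n x" unfolding T_def by (simp add: sum_distrib_left mult.commute)
    finally show ?thesis .
  qed
  have dec1: "T (Suc n) x \<le> T n x" for n
  proof -
    have "T (n + 1) x \<le> (\<Sum>y\<in>UNIV - A. pw P n x y * 1)"
      unfolding step by (intro sum_mono mult_left_mono Tle1 pwnn)
    then show ?thesis unfolding T_def by simp
  qed
  have decs: "decseq (\<lambda>n. T n x)" by (rule decseq_SucI) (rule dec1)
  have geo: "T (j * K) x \<le> q ^ j" for j
  proof (induction j)
    case 0 then show ?case using Tle1 by simp
  next
    case (Suc j)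
    have "T (Suc j * K) x = T (j * K + K) x" by (simp add: add.commute)
    also have "\<dots> \<le> q * T (j * K) x" by (rule dec)
    also have "\<dots> \<le> q * q ^ j" using Suc q0 by (intro mult_left_mono) auto
    finally show ?case by simp
  qed
  show ?thesis
  proof (rule LIMSEQ_I)
    fix e :: real assume "e > 0"
    then obtain j where j: "q ^ j < e" using real_arch_pow_inv q1 by blast
    show "\<exists>no. \<forall>n\<ge>no. norm ((\<Sum>y\<in>UNIV - A. pw P n x y) - 0) < e"
    proof (intro exI allI impI)
      fix n assume "j * K \<le> n"
      then have "T n x \<le> T (j * K) x" using decseqD[OF decs] by blast
      then show "norm ((\<Sum>y\<in>UNIV - A. pw P n x y) - 0) < e"
        using geo[of j] j Tnn[of n x] unfolding T_def by simp
    qed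
  qed
qed


lemma gen_eq1:
  fixes N1 D1 N2 D2 a b wi wo :: real
  assumes "a*(N2-D2)*N1*wo + b*wi*(D1-N1)*D2 = 0"
    and "D2 \<noteq> 0" "N1 \<noteq> 0" "wo \<noteq> 0" "D1 \<noteq> 0" "N2 \<noteq> 0"
  shows "a*(N2/D2 - 1) + b*(wi/wo)*(1/(N1/D1) - 1) = 0"
  using assms by (simp add: field_simps)

lemma gen_eq2:
  fixes N1 D1 N2 D2 a b wi wo :: real
  assumes "a*wi*(N1-D1)*N2 + b*(D2-N2)*D1*wo = 0"
    and "D2 \<noteq> 0" "N1 \<noteq> 0" "wo \<noteq> 0" "D1 \<noteq> 0" "N2 \<noteq> 0"
  shows "a*(wi/wo)*(N1/D1 - 1) + b*(1/(N2/D2) - 1) = 0"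
  using assms by (simp add: field_simps)

lemma eq12:
  fixes aG aR bG bR winG woutG winR woutR :: real
  assumes pos: "winG > 0" "woutG > 0" "winR > 0" "woutR > 0" "aG > 0" "aR > 0" "bG > 0" "bR > 0"
    and rel: "woutR * woutG = winG * winR"
  shows "aG * (zetaR aG aR bG bR winG woutG winR woutR - 1)
       + bR * (winG / woutG) * (1 / zetaG aG aR bG bR winG woutG winR woutR - 1) = 0"
    and "aR * (winG / woutG) * (zetaG aG aR bG bR winG woutG winR woutR - 1)
       + bG * (1 / zetaR aG aR bG bR winG woutG winR woutR - 1) = 0"
proof -
  have d1: "aG * woutG + bR * winG > 0" "aR * woutR + bG * winR > 0" using pos by (simp_all add: add_pos_pos)
  have p1: "aG * (bG * winR * (aG * woutG + bR * winG) - aG * woutG * (aR * woutR + bG * winR)) *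
        (bR * winG * (aR * woutR + bG * winR)) * woutG +
        bR * winG * (aR * woutR * (aG * woutG + bR * winG) - bR * winG * (aR * woutR + bG * winR)) *
        (aG * woutG * (aR * woutR + bG * winR)) = 0"
    by algebra
  show "aG * (zetaR aG aR bG bR winG woutG winR woutR - 1)
       + bR * (winG / woutG) * (1 / zetaG aG aR bG bR winG woutG winR woutR - 1) = 0"
    unfolding zetaG_def zetaR_def
    apply (rule gen_eq1)
     apply (rule p1)
    using pos d1 by simp_all
  have p2: "aR * winG * (bR * winG * (aR * woutR + bG * winR) - aR * woutR * (aG * woutG + bR * winG)) * (bG * winR * (aG * woutG + bR * winG))
     + bG * (aG * woutG * (aR * woutR + bG * winR) - bG * winR * (aG * woutG + bR * winG)) * (aR * woutR * (aG * woutG + bR * winG)) * woutG = 0"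
    using rel by algebra
  show "aR * (winG / woutG) * (zetaG aG aR bG bR winG woutG winR woutR - 1)
       + bG * (1 / zetaR aG aR bG bR winG woutG winR woutR - 1) = 0"
    unfolding zetaG_def zetaR_def
    apply (rule gen_eq2)
     apply (rule p2)
    using pos d1 by simp_all
qed


locale moran =
  fixes G :: "'v::finite set" and w :: "'v \<Rightarrow> 'v \<Rightarrow> real"
    and aG aR bG bR winG woutG winR woutR :: real
  assumes w_nonneg: "\<And>i j. w i j \<ge> 0"
    and strongly_connected: "\<And>i j. (i, j) \<in> {(i, j). w i j > 0}\<^sup>*"
    and same_color: "\<And>i j. (i \<in> G \<longleftrightarrow> j \<in> G) \<Longrightarrow> w i j = 0"
    and in_G: "\<And>i. i \<in> G \<Longrightarrow> (\<Sum>j\<in>UNIV. w j i) = winG"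
    and out_G: "\<And>i. i \<in> G \<Longrightarrow> (\<Sum>j\<in>UNIV. w i j) = woutG"
    and in_R: "\<And>i. i \<notin> G \<Longrightarrow> (\<Sum>j\<in>UNIV. w j i) = winR"
    and out_R: "\<And>i. i \<notin> G \<Longrightarrow> (\<Sum>j\<in>UNIV. w i j) = woutR"
    and deg_pos: "winG > 0" "woutG > 0" "winR > 0" "woutR > 0"
    and balance: "\<And>i j. i \<in> G \<Longrightarrow> j \<notin> G \<Longrightarrow> w j i = winG / woutG * w i j"
    and fit_pos: "aG > 0" "aR > 0" "bG > 0" "bR > 0"
begin

abbreviation "f \<equiv> fitness G aG aR bG bR"
abbreviation "W \<equiv> total_weight G w aG aR bG bR"
abbreviation "P \<equiv> moran_trans G w aG aR bG bR"
abbreviation "zG \<equiv> zetaG aG aR bG bR winG woutG winR woutR"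
abbreviation "zR \<equiv> zetaR aG aR bG bR winG woutG winR woutR"
definition "z i = (if i \<in> G then zG else zR)"
definition "F x j i = f x j * w j i / W x"

lemma G_not_UNIV: "G \<noteq> UNIV"
proof
  assume "G = UNIV"
  then have "(\<Sum>j\<in>UNIV. w undefined j) = woutG" using out_G by simp
  moreover have "(\<Sum>j\<in>UNIV. w undefined j) = 0" using same_color \<open>G = UNIV\<close> by simp
  ultimately show False using deg_pos by simp
qed

lemma G_not_empty: "G \<noteq> {}"
proof
  assume "G = {}"
  then have "(\<Sum>j\<in>UNIV. w undefined j) = woutR" using out_R by simp
  moreover have "(\<Sum>j\<in>UNIV. w undefined j) = 0" using same_color \<open>G = {}\<close> by simp
  ultimately show False using deg_pos by simp
qed

lemma rel: "woutR * woutG = winG * winR"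
proof -
  obtain r where r: "r \<notin> G" using G_not_UNIV by auto
  have "w r j = winG / woutG * w j r" for j
    using balance[of j r] same_color[of r j] same_color[of j r] r by (cases "j \<in> G") auto
  then have "(\<Sum>j\<in>UNIV. w r j) = (\<Sum>j\<in>UNIV. winG / woutG * w j r)" by simp
  also have "\<dots> = winG / woutG * winR" by (simp only: sum_distrib_left[symmetric] in_R[OF r])
  finally have "woutR = winG / woutG * winR" using out_R[OF r] by simp
  then show ?thesis using deg_pos by (simp add: field_simps)
qed

lemma f_pos: "f x j > 0"
  using fit_pos by (simp add: fitness_def)

lemma W_pos: "W x > 0"
proof -
  have "W x = (\<Sum>j\<in>UNIV. f x j * (\<Sum>k\<in>UNIV. w j k))"
    by (simp add: total_weight_def sum_distrib_left)
  also have "\<dots> > 0"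
  proof (rule sum_pos)
    fix j :: 'v
    have "(\<Sum>k\<in>UNIV. w j k) > 0" using out_G[of j] out_R[of j] deg_pos by (cases "j \<in> G") auto
    then show "f x j * (\<Sum>k\<in>UNIV. w j k) > 0" using f_pos by simp
  qed auto
  finally show ?thesis .
qed

lemma F_nonneg: "F x j i \<ge> 0"
  unfolding F_def using f_pos[of x j] W_pos[of x] w_nonneg[of j i] by simp

lemma F_sum: "(\<Sum>j\<in>UNIV. \<Sum>i\<in>UNIV. F x j i) = 1"
proof -
  have "(\<Sum>j\<in>UNIV. \<Sum>i\<in>UNIV. F x j i) = (\<Sum>j\<in>UNIV. \<Sum>i\<in>UNIV. f x j * w j i) / W x"
    unfolding F_def by (simp add: sum_divide_distrib)
  also have "\<dots> = W x / W x" by (simp add: total_weight_def)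
  finally have "(\<Sum>j\<in>UNIV. \<Sum>i\<in>UNIV. F x j i) = W x / W x" .
  then show ?thesis using W_pos[of x] by simp
qed

lemma P_expand: "P x y = (\<Sum>j\<in>UNIV. \<Sum>i\<in>UNIV. if replace_step x j i = y then F x j i else 0)"
proof -
  have "P x y = (\<Sum>p\<in>{p\<in>UNIV. replace_step x (fst p) (snd p) = y}. F x (fst p) (snd p))"
    unfolding moran_trans_def F_def by (rule sum.cong) (auto simp: split_def)
  also have "\<dots> = (\<Sum>p\<in>UNIV. if replace_step x (fst p) (snd p) = y then F x (fst p) (snd p) else 0)"
    by (rule sum.inter_filter) simp
  also have "\<dots> = (\<Sum>j\<in>UNIV. \<Sum>i\<in>UNIV. if replace_step x j i = y then F x j i else 0)"
    unfolding UNIV_Times_UNIV[symmetric] sum.cartesian_product by (simp add: split_def)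
  finally show ?thesis .
qed

lemma trans_sum: "(\<Sum>y\<in>UNIV. P x y * h y) = (\<Sum>j\<in>UNIV. \<Sum>i\<in>UNIV. F x j i * h (replace_step x j i))"
proof -
  have "(\<Sum>y\<in>UNIV. P x y * h y) = (\<Sum>y\<in>UNIV. \<Sum>j\<in>UNIV. \<Sum>i\<in>UNIV. if replace_step x j i = y then F x j i * h y else 0)"
    unfolding P_expand sum_distrib_right by (intro sum.cong refl) auto
  also have "\<dots> = (\<Sum>j\<in>UNIV. \<Sum>y\<in>UNIV. \<Sum>i\<in>UNIV. if replace_step x j i = y then F x j i * h y else 0)"
    by (rule sum.swap)
  also have "\<dots> = (\<Sum>j\<in>UNIV. \<Sum>i\<in>UNIV. \<Sum>y\<in>UNIV. if replace_step x j i = y then F x j i * h y else 0)"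
    by (intro sum.cong refl) (rule sum.swap)
  also have "\<dots> = (\<Sum>j\<in>UNIV. \<Sum>i\<in>UNIV. F x j i * h (replace_step x j i))"
    by simp
  finally show ?thesis .
qed

lemma P_nonneg: "P x y \<ge> 0"
  unfolding P_expand by (intro sum_nonneg) (simp add: F_nonneg)

lemma P_rowsum: "(\<Sum>y\<in>UNIV. P x y) = 1"
  using trans_sum[of x "\<lambda>_. 1"] F_sum by simp

lemma P_formula: "P x y = (\<Sum>j\<in>UNIV. \<Sum>i\<in>UNIV. F x j i * (if replace_step x j i = y then 1 else 0))"
  using trans_sum[of x "\<lambda>v. if v = y then 1 else 0"] by (simp add: delta2)

lemma P_UNIV: "P UNIV UNIV = 1"
  using F_sum unfolding P_formula by (simp add: replace_step_def)

lemma P_empty: "P {} {} = 1"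
  using F_sum unfolding P_formula by (simp add: replace_step_def)


lemma zG_pos: "zG > 0" and zR_pos: "zR > 0"
  using fit_pos deg_pos by (simp_all add: zetaG_def zetaR_def add_pos_pos)

lemma z_pos: "z i > 0"
  using zG_pos zR_pos by (simp add: z_def)

definition "dl x j i = (if j \<in> x \<and> i \<notin> x then z i - 1 else if j \<notin> x \<and> i \<in> x then 1 / z i - 1 else 0)"
definition "D x j i = f x j * w j i * dl x j i"

lemma Phi_repl: "prod z (replace_step x j i) = prod z x * (1 + dl x j i)"
proof (cases "j \<in> x")
  case True
  then show ?thesis
  proof (cases "i \<in> x")
    case True
    then have "insert i x = x" by auto
    then show ?thesis using \<open>j \<in> x\<close> True by (simp add: replace_step_def dl_def)
  next
    case False
    then show ?thesis using \<open>j \<in> x\<close> by (simp add: replace_step_def dl_def prod.insert mult.commute)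
  qed
next
  case False
  then show ?thesis
  proof (cases "i \<in> x")
    case True
    have "prod z x = z i * prod z (x - {i})" using True by (simp add: prod.remove)
    then show ?thesis using \<open>j \<notin> x\<close> True z_pos[of i] by (simp add: replace_step_def dl_def field_simps)
  next
    case False
    then have "x - {i} = x" by auto
    then show ?thesis using \<open>j \<notin> x\<close> False by (simp add: replace_step_def dl_def)
  qed
qed

lemma pair_GR:
  assumes g: "g \<in> G" and r: "r \<notin> G"
  shows "D x g r + D x r g = 0"
proof -
  note e = eq12[OF deg_pos fit_pos rel]
  have bal: "w r g = winG / woutG * w g r" by (rule balance[OF g r])
  have zg: "z g = zG" and zr: "z r = zR" using g r by (simp_all add: z_def)
  show ?thesis
  proof (cases "g \<in> x")
    case gx: True
    show ?thesis
    proof (cases "r \<in> x")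
      case True
      then show ?thesis using gx by (simp add: D_def dl_def)
    next
      case False
      have "D x g r = aG * w g r * (zR - 1)" using gx False g by (simp add: D_def dl_def fitness_def zr)
      moreover have "D x r g = bR * (winG / woutG * w g r) * (1 / zG - 1)"
        using gx False g r by (simp add: D_def dl_def fitness_def zg bal)
      moreover have "aG * w g r * (zR - 1) + bR * (winG / woutG * w g r) * (1 / zG - 1)
          = w g r * (aG * (zR - 1) + bR * (winG / woutG) * (1 / zG - 1))"
        by (simp add: algebra_simps)
      ultimately show ?thesis using e(1) by simp
    qed
  next
    case gx: False
    show ?thesis
    proof (cases "r \<in> x")
      case False
      then show ?thesis using gx by (simp add: D_def dl_def)
    next
      case True
      have "D x g r = bG * w g r * (1 / zR - 1)" using gx True g r by (simp add: D_def dl_def fitness_def zr)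
      moreover have "D x r g = aR * (winG / woutG * w g r) * (zG - 1)"
        using gx True g r by (simp add: D_def dl_def fitness_def zg bal)
      moreover have "bG * w g r * (1 / zR - 1) + aR * (winG / woutG * w g r) * (zG - 1)
          = w g r * (aR * (winG / woutG) * (zG - 1) + bG * (1 / zR - 1))"
        by (simp add: algebra_simps)
      ultimately show ?thesis using e(2) by simp
    qed
  qed
qed

lemma pair0: "D x j i + D x i j = 0"
proof (cases "j \<in> G \<longleftrightarrow> i \<in> G")
  case True
  then have "w j i = 0" "w i j = 0" using same_color by auto
  then show ?thesis by (simp add: D_def)
next
  case False
  then show ?thesis
  proof (cases "j \<in> G")
    case True
    then show ?thesis using False pair_GR[of j i x] by simp
  next
    case jG: False
    then show ?thesis using False pair_GR[of i j x] by (simp add: add.commute)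
  qed
qed

lemma D_sum: "(\<Sum>j\<in>UNIV. \<Sum>i\<in>UNIV. D x j i) = 0"
proof -
  let ?S = "(\<Sum>j\<in>UNIV. \<Sum>i\<in>UNIV. D x j i)"
  have "?S = (\<Sum>i\<in>UNIV. \<Sum>j\<in>UNIV. D x j i)" by (rule sum.swap)
  then have "2 * ?S = (\<Sum>j\<in>UNIV. \<Sum>i\<in>UNIV. D x j i) + (\<Sum>j\<in>UNIV. \<Sum>i\<in>UNIV. D x i j)" by simp
  also have "\<dots> = (\<Sum>j\<in>UNIV. \<Sum>i\<in>UNIV. D x j i + D x i j)" by (simp add: sum.distrib)
  also have "\<dots> = 0" by (simp add: pair0)
  finally show ?thesis by simp
qed

lemma martingale: "(\<Sum>y\<in>UNIV. P x y * prod z y) = prod z x"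
proof -
  have "(\<Sum>y\<in>UNIV. P x y * prod z y) = (\<Sum>j\<in>UNIV. \<Sum>i\<in>UNIV. F x j i * (prod z x * (1 + dl x j i)))"
    unfolding trans_sum Phi_repl ..
  also have "\<dots> = prod z x * (\<Sum>j\<in>UNIV. \<Sum>i\<in>UNIV. F x j i) + prod z x * (\<Sum>j\<in>UNIV. \<Sum>i\<in>UNIV. D x j i) / W x"
    by (simp add: F_def D_def sum_distrib_left sum_divide_distrib sum.distrib algebra_simps)
  also have "\<dots> = prod z x" by (simp add: F_sum D_sum)
  finally show ?thesis .
qed

lemma crossing:
  assumes "(a, b) \<in> {(i, j). w i j > 0}\<^sup>*" "a \<in> x" "b \<notin> x"
  shows "\<exists>j i. j \<in> x \<and> i \<notin> x \<and> w j i > 0"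
  using assms
proof (induction rule: rtrancl_induct)
  case base
  then show ?case by simp
next
  case (step y c)
  show ?case
  proof (cases "y \<in> x")
    case True
    then show ?thesis using step by auto
  next
    case False
    then show ?thesis using step by auto
  qed
qed

lemma P_step_pos:
  assumes "x \<noteq> {}" "x \<noteq> UNIV"
  shows "\<exists>i. i \<notin> x \<and> P x (insert i x) > 0"
proof -
  obtain a b where "a \<in> x" "b \<notin> x" using assms by auto
  then obtain j i where ji: "j \<in> x" "i \<notin> x" "w j i > 0"
    using crossing[OF strongly_connected] by blast
  let ?g = "\<lambda>j' i'. F x j' i' * (if replace_step x j' i' = insert i x then 1 else 0)"
  have nn: "?g j' i' \<ge> 0" for j' i' by (simp add: F_nonneg)
  have Fp: "F x j i > 0" unfolding F_def using f_pos[of x j] W_pos[of x] ji(3) by simp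
  have "F x j i = ?g j i" using ji by (simp add: replace_step_def)
  also have "\<dots> \<le> (\<Sum>i'\<in>UNIV. ?g j i')" by (rule member_le_sum) (auto simp: nn)
  also have "\<dots> \<le> (\<Sum>j'\<in>UNIV. \<Sum>i'\<in>UNIV. ?g j' i')" by (rule member_le_sum) (auto intro!: sum_nonneg simp: nn)
  also have "\<dots> = P x (insert i x)" by (simp add: P_formula)
  finally have "F x j i \<le> P x (insert i x)" .
  then show ?thesis using Fp ji by force
qed

lemma pwnn: "pw P n x y \<ge> 0"
  by (rule pw_nonneg) (rule P_nonneg)

lemma reach_k: "card (UNIV - x) = k \<Longrightarrow> x \<noteq> {} \<Longrightarrow> pw P k x UNIV > 0"
proof (induction k arbitrary: x)
  case 0
  then have "x = UNIV" by auto
  then show ?case by simp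
next
  case (Suc k)
  then have "x \<noteq> UNIV" by auto
  then obtain i where i: "i \<notin> x" "P x (insert i x) > 0" using P_step_pos Suc.prems(2) by blast
  have "UNIV - insert i x = (UNIV - x) - {i}" by auto
  then have "card (UNIV - insert i x) = k" using Suc.prems(1) i(1) by (simp add: card_Diff_singleton)
  then have ih: "pw P k (insert i x) UNIV > 0" using Suc.IH by blast
  have "P x (insert i x) * pw P k (insert i x) UNIV \<le> (\<Sum>z\<in>UNIV. P x z * pw P k z UNIV)"
    by (rule member_le_sum) (auto intro!: mult_nonneg_nonneg P_nonneg pwnn)
  also have "\<dots> = pw P (Suc k) x UNIV" by (rule pw_left[symmetric])
  finally show ?case using i(2) ih by (smt (verit) mult_pos_pos)
qed

lemma pw_mono_UNIV: "pw P n x UNIV \<le> pw P (Suc n) x UNIV"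
proof -
  have "pw P n x UNIV * P UNIV UNIV \<le> (\<Sum>z\<in>UNIV. pw P n x z * P z UNIV)"
    by (rule member_le_sum) (auto intro!: mult_nonneg_nonneg P_nonneg pwnn)
  then show ?thesis by (simp add: P_UNIV)
qed

lemma reach_N: "x \<noteq> {} \<Longrightarrow> pw P CARD('v) x UNIV > 0"
proof -
  assume x: "x \<noteq> {}"
  have inc: "incseq (\<lambda>n. pw P n x UNIV)" by (rule incseq_SucI) (rule pw_mono_UNIV)
  have "card (UNIV - x) \<le> CARD('v)" by (rule card_mono) auto
  then have "pw P (card (UNIV - x)) x UNIV \<le> pw P CARD('v) x UNIV" using incseqD[OF inc] by blast
  moreover have "pw P (card (UNIV - x)) x UNIV > 0" using reach_k x by blast
  ultimately show ?thesis by linarith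
qed

lemma UNIV_ne_empty: "(UNIV :: 'v set) \<noteq> {}" by simp

lemma transient0: "(\<lambda>n. \<Sum>y\<in>UNIV - {UNIV, {}}. pw P n x y) \<longlonglongrightarrow> 0"
proof (rule absorption[where K = "CARD('v)"])
  show "\<And>x y. P x y \<ge> 0" by (rule P_nonneg)
  show "\<And>x. (\<Sum>y\<in>UNIV. P x y) = 1" by (rule P_rowsum)
  show "\<And>a. a \<in> {UNIV, {}} \<Longrightarrow> P a a = 1" using P_UNIV P_empty by auto
  fix y :: "'v set"
  have s: "(\<Sum>z\<in>{UNIV, {}}. pw P CARD('v) y z) = pw P CARD('v) y UNIV + pw P CARD('v) y {}"
    using UNIV_ne_empty by simp
  show "(\<Sum>z\<in>{UNIV, {}}. pw P CARD('v) y z) > 0"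
  proof (cases "y = {}")
    case True
    have "pw P CARD('v) {} {} = 1" using pw_absorb[of P "{}"] P_nonneg P_rowsum P_empty by simp
    then show ?thesis unfolding s using True pwnn[of "CARD('v)" "{}" UNIV] by simp
  next
    case False
    then show ?thesis unfolding s using reach_N[of y] pwnn[of "CARD('v)" y "{}"] by simp
  qed
qed

lemma fixation:
  assumes Z: "prod z UNIV \<noteq> 1"
  shows "(\<lambda>n. pw P n x UNIV) \<longlonglongrightarrow> (1 - prod z x) / (1 - prod z UNIV)"
proof -
  define A where "A = {UNIV, {} :: 'v set}"
  define T where "T n = (\<Sum>y\<in>UNIV - A. pw P n x y)" for n
  define S where "S n = (\<Sum>y\<in>UNIV - A. pw P n x y * prod z y)" for n
  define Z where "Z = prod z UNIV"
  define M where "M = (\<Sum>y\<in>UNIV. prod z y)"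
  have T0: "T \<longlonglongrightarrow> 0" unfolding T_def A_def by (rule transient0)
  have znn: "prod z y \<ge> 0" for y by (intro prod_nonneg) (simp add: less_imp_le z_pos)
  have zM: "prod z y \<le> M" for y unfolding M_def by (rule member_le_sum) (auto simp: znn)
  have S0: "S n \<ge> 0" for n unfolding S_def by (intro sum_nonneg mult_nonneg_nonneg pwnn znn)
  have SM: "S n \<le> M * T n" for n
  proof -
    have "S n \<le> (\<Sum>y\<in>UNIV - A. pw P n x y * M)" unfolding S_def
      by (intro sum_mono mult_left_mono zM pwnn)
    then show ?thesis unfolding T_def by (simp add: sum_distrib_left sum_distrib_right mult.commute)
  qed
  have MT: "(\<lambda>n. M * T n) \<longlonglongrightarrow> 0" using tendsto_mult_left[OF T0, of M] by simp
  have S_lim: "S \<longlonglongrightarrow> 0"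
    by (rule tendsto_sandwich[of "\<lambda>_. 0" _ _ "\<lambda>n. M * T n"]) (auto simp: S0 SM MT)
  have ne: "UNIV \<noteq> ({} :: 'v set)" by simp
  have key: "pw P n x UNIV = (prod z x - 1 + T n - S n) / (Z - 1)" for n
  proof -
    have h: "(\<Sum>y\<in>UNIV. pw P n x y * prod z y) = prod z x" by (rule pw_harmonic) (rule martingale)
    have r: "(\<Sum>y\<in>UNIV. pw P n x y) = 1" by (rule pw_rowsum) (rule P_rowsum)
    have sp1: "(\<Sum>y\<in>UNIV. pw P n x y * prod z y) = (\<Sum>y\<in>UNIV - A. pw P n x y * prod z y) + (\<Sum>y\<in>A. pw P n x y * prod z y)"
      by (rule sum.subset_diff) auto
    have sp2: "(\<Sum>y\<in>UNIV. pw P n x y) = (\<Sum>y\<in>UNIV - A. pw P n x y) + (\<Sum>y\<in>A. pw P n x y)"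
      by (rule sum.subset_diff) auto
    have a1: "(\<Sum>y\<in>A. pw P n x y * prod z y) = pw P n x UNIV * Z + pw P n x {}"
      unfolding A_def Z_def using ne by simp
    have a2: "(\<Sum>y\<in>A. pw P n x y) = pw P n x UNIV + pw P n x {}"
      unfolding A_def using ne by simp
    have "pw P n x UNIV * (Z - 1) = prod z x - 1 + T n - S n"
      using h r sp1 sp2 a1 a2 unfolding T_def S_def by (simp add: algebra_simps)
    moreover have "Z - 1 \<noteq> 0" using Z unfolding Z_def by simp
    ultimately show ?thesis by (simp add: field_simps)
  qed
  have "(\<lambda>n. (prod z x - 1 + T n - S n) / (Z - 1)) \<longlonglongrightarrow> (prod z x - 1 + 0 - 0) / (Z - 1)"
    by (intro tendsto_intros T0 S_lim) (use Z in \<open>simp add: Z_def\<close>)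
  moreover have "(prod z x - 1 + 0 - 0) / (Z - 1) = (1 - prod z x) / (1 - prod z UNIV)"
    using Z unfolding Z_def by (simp add: field_simps)
  ultimately show ?thesis using key by simp
qed

end

theorem mainTheorem3:
  fixes G :: "'v::finite set" and w :: "'v \<Rightarrow> 'v \<Rightarrow> real"
    and aG aR bG bR winG woutG winR woutR :: real
  assumes w_nonneg: "\<And>i j. w i j \<ge> 0"
    and w_diag: "\<And>i. w i i = 0"
    and strongly_connected: "\<And>i j. (i, j) \<in> {(i, j). w i j > 0}\<^sup>*"
    and same_color: "\<And>i j. (i \<in> G \<longleftrightarrow> j \<in> G) \<Longrightarrow> w i j = 0"
    and in_G: "\<And>i. i \<in> G \<Longrightarrow> (\<Sum>j\<in>UNIV. w j i) = winG"
    and out_G: "\<And>i. i \<in> G \<Longrightarrow> (\<Sum>j\<in>UNIV. w i j) = woutG"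
    and in_R: "\<And>i. i \<notin> G \<Longrightarrow> (\<Sum>j\<in>UNIV. w j i) = winR"
    and out_R: "\<And>i. i \<notin> G \<Longrightarrow> (\<Sum>j\<in>UNIV. w i j) = woutR"
    and deg_pos: "winG > 0" "woutG > 0" "winR > 0" "woutR > 0"
    and balance: "\<And>i j. i \<in> G \<Longrightarrow> j \<notin> G \<Longrightarrow> w j i = winG / woutG * w i j"
    and fit_pos: "aG > 0" "aR > 0" "bG > 0" "bR > 0"
  defines "zG \<equiv> zetaG aG aR bG bR winG woutG winR woutR"
    and "zR \<equiv> zetaR aG aR bG bR winG woutG winR woutR"
    and "NG \<equiv> card G" and "NR \<equiv> card (UNIV - G)" and "N \<equiv> CARD('v)"
  defines "Phi \<equiv> (\<lambda>x::'v set. \<Prod>i\<in>x. if i \<in> G then zG else zR)"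
  shows "(\<forall>x. (\<Sum>y\<in>UNIV. moran_trans G w aG aR bG bR x y * Phi y) = Phi x)
     \<and> (zG ^ NG * zR ^ NR \<noteq> 1 \<longrightarrow>
          (\<forall>x. (\<lambda>n. moran_nstep G w aG aR bG bR n x UNIV)
                 \<longlonglongrightarrow> (1 - Phi x) / (1 - zG ^ NG * zR ^ NR))
        \<and> (\<lambda>n. (1 / real N) * (\<Sum>i\<in>UNIV. moran_nstep G w aG aR bG bR n {i} UNIV))
             \<longlonglongrightarrow> (1 - (1 / real N) * (real NG * zG + real NR * zR)) / (1 - zG ^ NG * zR ^ NR))"
proof -
  interpret M: moran G w aG aR bG bR winG woutG winR woutR
    by unfold_locales (rule assms; assumption)+
  have PhiZ: "Phi x = prod M.z x" for x
    unfolding Phi_def by (intro prod.cong) (simp_all add: M.z_def zG_def zR_def)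
  have nstep: "moran_nstep G w aG aR bG bR n x y = pw (moran_trans G w aG aR bG bR) n x y" for n x y
    by (induction n arbitrary: y) simp_all
  have zU: "prod M.z UNIV = zG ^ NG * zR ^ NR"
  proof -
    have "prod M.z UNIV = (\<Prod>i\<in>UNIV. if i \<in> G then zG else zR)"
      by (intro prod.cong) (simp_all add: M.z_def zG_def zR_def)
    also have "\<dots> = zG ^ NG * zR ^ NR"
      by (simp add: prod.If_cases NG_def NR_def Compl_eq_Diff_UNIV)
    finally show ?thesis .
  qed
  have zsum: "(\<Sum>i\<in>UNIV. M.z i) = real NG * zG + real NR * zR"
  proof -
    have "(\<Sum>i\<in>UNIV. M.z i) = (\<Sum>i\<in>UNIV. if i \<in> G then zG else zR)"
      by (intro sum.cong) (simp_all add: M.z_def zG_def zR_def)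
    also have "\<dots> = real NG * zG + real NR * zR"
      by (simp add: sum.If_cases NG_def NR_def Compl_eq_Diff_UNIV)
    finally show ?thesis .
  qed
  have part1: "\<forall>x. (\<Sum>y\<in>UNIV. moran_trans G w aG aR bG bR x y * Phi y) = Phi x"
    using M.martingale by (simp add: PhiZ)
  have part2: "zG ^ NG * zR ^ NR \<noteq> 1 \<longrightarrow>
          (\<forall>x. (\<lambda>n. moran_nstep G w aG aR bG bR n x UNIV)
                 \<longlonglongrightarrow> (1 - Phi x) / (1 - zG ^ NG * zR ^ NR))
        \<and> (\<lambda>n. (1 / real N) * (\<Sum>i\<in>UNIV. moran_nstep G w aG aR bG bR n {i} UNIV))
             \<longlonglongrightarrow> (1 - (1 / real N) * (real NG * zG + real NR * zR)) / (1 - zG ^ NG * zR ^ NR)"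
  proof
    assume Zne: "zG ^ NG * zR ^ NR \<noteq> 1"
    then have Zne': "prod M.z UNIV \<noteq> 1" using zU by simp
    have lim: "(\<lambda>n. moran_nstep G w aG aR bG bR n x UNIV) \<longlonglongrightarrow> (1 - Phi x) / (1 - zG ^ NG * zR ^ NR)" for x
      using M.fixation[OF Zne', of x] by (simp add: nstep PhiZ zU)
    have "(\<lambda>n. (1 / real N) * (\<Sum>i\<in>UNIV. moran_nstep G w aG aR bG bR n {i} UNIV))
        \<longlonglongrightarrow> (1 / real N) * (\<Sum>i\<in>UNIV. (1 - Phi {i}) / (1 - zG ^ NG * zR ^ NR))"
      by (intro tendsto_mult_left tendsto_sum lim)
    moreover have "(1 / real N) * (\<Sum>i\<in>UNIV. (1 - Phi {i}) / (1 - zG ^ NG * zR ^ NR))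
        = (1 - (1 / real N) * (real NG * zG + real NR * zR)) / (1 - zG ^ NG * zR ^ NR)"
    proof -
      have Npos: "real N > 0" unfolding N_def by simp
      have "(\<Sum>i\<in>UNIV. (1 - Phi {i}) / (1 - zG ^ NG * zR ^ NR))
          = (real N - (real NG * zG + real NR * zR)) / (1 - zG ^ NG * zR ^ NR)"
        by (simp add: PhiZ sum_divide_distrib[symmetric] sum_subtractf zsum N_def)
      then show ?thesis using Npos by (simp add: field_simps)
    qed
    ultimately show "(\<forall>x. (\<lambda>n. moran_nstep G w aG aR bG bR n x UNIV)
                 \<longlonglongrightarrow> (1 - Phi x) / (1 - zG ^ NG * zR ^ NR))
        \<and> (\<lambda>n. (1 / real N) * (\<Sum>i\<in>UNIV. moran_nstep G w aG aR bG bR n {i} UNIV))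
             \<longlonglongrightarrow> (1 - (1 / real N) * (real NG * zG + real NR * zR)) / (1 - zG ^ NG * zR ^ NR)"
      using lim by simp
  qed
  show ?thesis using part1 part2 by blast
qed

end
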